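(* Let $\mathfrak g=\mathfrak{sl}_4(\mathbb C)$ with simple roots $\alpha_1,\alpha_2,\alpha_3$. Let $e=X_{\alpha_1}+X_{\alpha_2+\alpha_3}$ (orbit with partition $(3,1)$). Let $\mathfrak n_1$ be the span of $$H_{\alpha_1},\ H_{\alpha_2},\ X_{\alpha_1},\ X_{\alpha_2},\ X_{-\alpha_2},\ X_{-\alpha_1}+X_{\alpha_3},\ X_{-\alpha_3},\ X_{-\alpha_1-\alpha_2},\ X_{-\alpha_2-\alpha_3},\ X_{-\alpha_1-\alpha_2-\alpha_3}.$$ Then $\mathfrak n_1$ is a complement of $\mathfrak g^e$ in $\mathfrak g$ that is not $\operatorname{ad}h^+$-invariant, where $h^+=2H_{\alpha_1}+2H_{\alpha_2}+2H_{\alpha_3}$. Moreover, the transverse Poisson structure $\Lambda_{N_1}(q)$ on $N_1=e+\mathfrak n_1^\perp$ is not polynomial: some of its entries are rational functions of $q$ that are not polynomials.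
   Context: $(H_\alpha,X_\alpha,X_{-\alpha})$ denote Chevalley basis elements and $K$ is the Killing form. Transverse Poisson structure. Choose a basis $Z_1,\dots,Z_k$ of $\mathfrak g^e$ and a basis $X_1,\dots,X_p$ of the complement $\mathfrak n$. Let $(\overline{Z_i},\overline{X_j})$ be the $K$-dual basis, and identify $\mathfrak n^\perp$ with $\mathbb C^k$ via $q\mapsto\sum_s q_s\overline{Z_s}$. Define: - $C_N(q)_{l,m}=K(e+\sum_s q_s\overline{Z_s},[X_l,X_m])$; - $D_N(q)_{l,j}=K(\sum_s q_s\overline{Z_s},[X_l,Z_j])$; - $A_N(q)_{i,j}=K(\sum_s q_s\overline{Z_s},[Z_i,Z_j])$. Then $\Lambda_N(q)=A_N+{}^tD_N\,C_N^{-1}D_N$, defined where $C_N(q)$ is invertible; its entries are rational in $q$. *)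

theory Defs
  imports "HOL-Analysis.Analysis" "HOL-Library.Numeral_Type"
begin

type_synonym mat4 = "complex^4^4"

definition sl4 :: "mat4 set" where
  "sl4 = {A. trace A = 0}"

definition smul :: "complex \<Rightarrow> mat4 \<Rightarrow> mat4" where
  "smul c A = (\<chi> i j. c * A $ i $ j)"

definition brk :: "mat4 \<Rightarrow> mat4 \<Rightarrow> mat4" where
  "brk A B = A ** B - B ** A"

text \<open>Killing form of sl_n is 2n tr(xy); here n = 4.\<close>
definition killing :: "mat4 \<Rightarrow> mat4 \<Rightarrow> complex" where
  "killing A B = 8 * trace (A ** B)"

definition Emat :: "4 \<Rightarrow> 4 \<Rightarrow> mat4" where
  "Emat i j = (\<chi> a b. if a = i \<and> b = j then 1 else 0)"

text \<open>Chevalley basis of sl_4: X_{alpha_i+...+alpha_j} = E_{i-1,j}, X_{-beta} = transpose,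
  H_{alpha_i} = E_{i-1,i-1} - E_{i,i} (indices 0..3).\<close>
definition "H1 = Emat 0 0 - Emat 1 1"
definition "H2 = Emat 1 1 - Emat 2 2"
definition "H3 = Emat 2 2 - Emat 3 3"
definition "Xa1 = Emat 0 1"
definition "Xa2 = Emat 1 2"
definition "Xa3 = Emat 2 3"
definition "Xa12 = Emat 0 2"
definition "Xa23 = Emat 1 3"
definition "Xa123 = Emat 0 3"
definition "Xm1 = Emat 1 0"
definition "Xm2 = Emat 2 1"
definition "Xm3 = Emat 3 2"
definition "Xm12 = Emat 2 0"
definition "Xm23 = Emat 3 1"
definition "Xm123 = Emat 3 0"

definition "e_nil = Xa1 + Xa23"
definition "hplus = smul 2 H1 + smul 2 H2 + smul 2 H3"

definition cent_e :: "mat4 set" where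
  "cent_e = {A \<in> sl4. brk e_nil A = 0}"

definition Xn1 :: "10 \<Rightarrow> mat4" where
  "Xn1 i = [H1, H2, Xa1, Xa2, Xm2, Xm1 + Xa3, Xm3, Xm12, Xm23, Xm123] ! nat (Rep_bit0 i)"

definition n1 :: "mat4 set" where
  "n1 = {A. \<exists>c :: complex^10. A = (\<Sum>i\<in>UNIV. smul (c $ i) (Xn1 i))}"

inductive_set poly_fun :: "(complex^'k \<Rightarrow> complex) set" where
  const: "(\<lambda>q. c) \<in> poly_fun"
| coord: "(\<lambda>q. q $ i) \<in> poly_fun"
| add: "f \<in> poly_fun \<Longrightarrow> g \<in> poly_fun \<Longrightarrow> (\<lambda>q. f q + g q) \<in> poly_fun"
| mult: "f \<in> poly_fun \<Longrightarrow> g \<in> poly_fun \<Longrightarrow> (\<lambda>q. f q * g q) \<in> poly_fun"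

text \<open>Transverse Poisson structure data, given the basis Z of g^e (indexed by 'k),
  the dual elements Zbar, and the basis X of the complement (indexed by 'p).\<close>
definition qpt :: "('k::finite \<Rightarrow> mat4) \<Rightarrow> complex^'k \<Rightarrow> mat4" where
  "qpt Zbar q = (\<Sum>s\<in>UNIV. smul (q $ s) (Zbar s))"

definition C_N :: "('p::finite \<Rightarrow> mat4) \<Rightarrow> ('k::finite \<Rightarrow> mat4) \<Rightarrow> complex^'k \<Rightarrow> complex^'p^'p" where
  "C_N X Zbar q = (\<chi> l m. killing (e_nil + qpt Zbar q) (brk (X l) (X m)))"

definition D_N :: "('p::finite \<Rightarrow> mat4) \<Rightarrow> ('k::finite \<Rightarrow> mat4) \<Rightarrow> ('k \<Rightarrow> mat4) \<Rightarrow> complex^'k \<Rightarrow> complex^'k^'p" where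
  "D_N X Z Zbar q = (\<chi> l j. killing (qpt Zbar q) (brk (X l) (Z j)))"

definition A_N :: "('k::finite \<Rightarrow> mat4) \<Rightarrow> ('k \<Rightarrow> mat4) \<Rightarrow> complex^'k \<Rightarrow> complex^'k^'k" where
  "A_N Z Zbar q = (\<chi> i j. killing (qpt Zbar q) (brk (Z i) (Z j)))"

definition Lambda_N :: "('p::finite \<Rightarrow> mat4) \<Rightarrow> ('k::finite \<Rightarrow> mat4) \<Rightarrow> ('k \<Rightarrow> mat4) \<Rightarrow> complex^'k \<Rightarrow> complex^'k^'k" where
  "Lambda_N X Z Zbar q =
     A_N Z Zbar q + transpose (D_N X Z Zbar q) ** matrix_inv (C_N X Zbar q) ** D_N X Z Zbar q"

end

theory Submission
  imports Defs
begin

lemma UNIV10: "(UNIV::10 set) = {0,1,2,3,4,5,6,7,8,9}"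
proof -
  have "x \<in> {0,1,2,3,4,5,6,7,8,9}" for x :: 10
  proof (cases x rule: bit0.cases)
    case (1 z)
    then have "0 \<le> z" "z < 10" by simp_all
    then have "z = 0 \<or> z = 1 \<or> z = 2 \<or> z = 3 \<or> z = 4 \<or> z = 5 \<or> z = 6 \<or> z = 7 \<or> z = 8 \<or> z = 9" by arith
    then show ?thesis using 1 by (elim disjE) simp_all
  qed
  then show ?thesis by auto
qed
lemma all10: "(\<forall>i::10. P i) \<longleftrightarrow> P 0 \<and> P 1 \<and> P 2 \<and> P 3 \<and> P 4 \<and> P 5 \<and> P 6 \<and> P 7 \<and> P 8 \<and> P 9"
proof -
  have "(\<forall>i::10. P i) \<longleftrightarrow> (\<forall>i\<in>UNIV. P i)" by simp
  also have "\<dots> \<longleftrightarrow> P 0 \<and> P 1 \<and> P 2 \<and> P 3 \<and> P 4 \<and> P 5 \<and> P 6 \<and> P 7 \<and> P 8 \<and> P 9"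
    unfolding UNIV10 by simp
  finally show ?thesis .
qed
lemma "(3::10) \<noteq> 7" "(0::10) \<noteq> 9" "(1::10) \<noteq> 8" by simp_all
lemma "(3::10) \<notin> {4,5,6,7,8,9}" by simp
lemma sum10: "sum f (UNIV::10 set) = f 0 + f 1 + f 2 + f 3 + f 4 + f 5 + f 6 + f 7 + f 8 + f 9"
  unfolding UNIV10 apply (subst sum.insert, simp, simp)+ by (simp add: add.assoc)
lemma UNIV4: "(UNIV::4 set) = {0,1,2,3}"
proof -
  have "x \<in> {0,1,2,3}" for x :: 4
  proof (cases x rule: bit0.cases)
    case (1 z)
    then have "0 \<le> z" "z < 4" by simp_all
    then have "z = 0 \<or> z = 1 \<or> z = 2 \<or> z = 3" by arith
    then show ?thesis using 1 by (elim disjE) simp_all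
  qed
  then show ?thesis by auto
qed
lemma UNIV5: "(UNIV::5 set) = {0,1,2,3,4}"
proof -
  have "x \<in> {0,1,2,3,4}" for x :: 5
  proof (cases x rule: bit1.cases)
    case (1 z)
    then have "0 \<le> z" "z < 5" by simp_all
    then have "z = 0 \<or> z = 1 \<or> z = 2 \<or> z = 3 \<or> z = 4" by arith
    then show ?thesis using 1 by (elim disjE) simp_all
  qed
  then show ?thesis by auto
qed
lemma sum4: "sum f (UNIV::4 set) = f 0 + f 1 + f 2 + f 3"
  unfolding UNIV4 apply (subst sum.insert, simp, simp)+ by (simp add: add.assoc)
lemma sum5: "sum f (UNIV::5 set) = f 0 + f 1 + f 2 + f 3 + f 4"
  unfolding UNIV5 apply (subst sum.insert, simp, simp)+ by (simp add: add.assoc)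
lemma all4: "(\<forall>i::4. P i) \<longleftrightarrow> P 0 \<and> P 1 \<and> P 2 \<and> P 3"
proof -
  have "(\<forall>i::4. P i) \<longleftrightarrow> (\<forall>i\<in>UNIV. P i)" by simp
  also have "\<dots> \<longleftrightarrow> P 0 \<and> P 1 \<and> P 2 \<and> P 3" unfolding UNIV4 by simp
  finally show ?thesis .
qed
lemma all5: "(\<forall>i::5. P i) \<longleftrightarrow> P 0 \<and> P 1 \<and> P 2 \<and> P 3 \<and> P 4"
proof -
  have "(\<forall>i::5. P i) \<longleftrightarrow> (\<forall>i\<in>UNIV. P i)" by simp
  also have "\<dots> \<longleftrightarrow> P 0 \<and> P 1 \<and> P 2 \<and> P 3 \<and> P 4" unfolding UNIV5 by simp
  finally show ?thesis .
qed

lemma Xn1_vals: "Xn1 0 = H1" "Xn1 1 = H2" "Xn1 2 = Xa1" "Xn1 3 = Xa2" "Xn1 4 = Xm2"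
  "Xn1 5 = Xm1 + Xa3" "Xn1 6 = Xm3" "Xn1 7 = Xm12" "Xn1 8 = Xm23" "Xn1 9 = Xm123"
  by (simp_all add: Xn1_def bit0.Rep_numeral bit0.Rep_0 bit0.Rep_1)

lemma Emat_nth[simp]: "Emat i j $ a $ b = (if a = i \<and> b = j then 1 else 0)"
  by (simp add: Emat_def)
lemma smul_nth[simp]: "smul c A $ a $ b = c * A $ a $ b"
  by (simp add: smul_def)
lemma mm_nth: "(A ** B) $ i $ j = A$i$0 * B$0$j + A$i$1 * B$1$j + A$i$2 * B$2$j + A$i$3 * B$3$j"
  for A B :: mat4
  by (simp add: matrix_matrix_mult_def sum4)
lemma killing_ex: "killing A B = 8 * (\<Sum>i\<in>UNIV. \<Sum>k\<in>UNIV. A$i$k * B$k$i)"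
  by (simp add: killing_def trace_def matrix_matrix_mult_def)

lemma test: "killing (Emat 2 0) (brk (Emat 0 1) (Emat 1 2)) = 8"
  by (simp add: killing_ex brk_def mm_nth sum4)


lemma mm_add_r: "(A + B) ** C = A ** C + B ** (C::mat4)"
  by (simp add: vec_eq_iff matrix_matrix_mult_def distrib_right sum.distrib)
lemma mm_diff_r: "(A - B) ** C = A ** C - B ** (C::mat4)"
  by (simp add: vec_eq_iff matrix_matrix_mult_def left_diff_distrib sum_subtractf)
lemma mm_add_l: "C ** (A + B) = C ** A + C ** (B::mat4)"
  by (simp add: vec_eq_iff matrix_matrix_mult_def distrib_left sum.distrib)
lemma mm_diff_l: "C ** (A - B) = C ** A - C ** (B::mat4)"
  by (simp add: vec_eq_iff matrix_matrix_mult_def right_diff_distrib sum_subtractf)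
lemma smul_mm_l: "smul c A ** B = smul c (A ** B)"
  by (simp add: vec_eq_iff matrix_matrix_mult_def smul_def sum_distrib_left mult.assoc)
lemma smul_mm_r: "A ** smul c B = smul c (A ** B)"
  by (simp add: vec_eq_iff matrix_matrix_mult_def smul_def sum_distrib_left mult.left_commute)
lemma smul_diff: "smul c (A - B) = smul c A - smul c B"
  by (simp add: vec_eq_iff smul_def right_diff_distrib)
lemma smul_add: "smul c (A + B) = smul c A + smul c B"
  by (simp add: vec_eq_iff smul_def distrib_left)
lemma smul_zero[simp]: "smul c 0 = 0" "smul 0 A = 0"
  by (simp_all add: vec_eq_iff smul_def)
lemma trace_smul: "trace (smul c A) = c * trace A"
  by (simp add: trace_def smul_def sum_distrib_left)

lemma mm_zero[simp]: "0 ** (B::mat4) = 0" "B ** (0::mat4) = 0"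
  by (simp_all add: vec_eq_iff matrix_matrix_mult_def)
lemma killing_sym: "killing A B = killing B A"
  unfolding killing_def by (simp only: trace_mul_sym[of A B])
lemma killing_add_l: "killing (A + B) C = killing A C + killing B C"
  unfolding killing_def mm_add_r trace_add by (simp only: distrib_left)
lemma killing_add_r: "killing C (A + B) = killing C A + killing C B"
  unfolding killing_def mm_add_l trace_add by (simp only: distrib_left)
lemma killing_diff_l: "killing (A - B) C = killing A C - killing B C"
  unfolding killing_def mm_diff_r trace_sub by (simp only: right_diff_distrib)
lemma killing_diff_r: "killing C (A - B) = killing C A - killing C B"
  unfolding killing_def mm_diff_l trace_sub by (simp only: right_diff_distrib)
lemma killing_smul_l: "killing (smul c A) B = c * killing A B"
  unfolding killing_def smul_mm_l trace_smul by (simp only: mult.left_commute)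
lemma killing_smul_r: "killing B (smul c A) = c * killing B A"
  unfolding killing_def smul_mm_r trace_smul by (simp only: mult.left_commute)
lemma killing_zero_l[simp]: "killing 0 B = 0"
  unfolding killing_def by (simp add: trace_def)
lemma killing_zero_r[simp]: "killing B 0 = 0"
  unfolding killing_def by (simp add: trace_def)
lemma killing_sum_l: "killing (\<Sum>s\<in>S. f s) B = (\<Sum>s\<in>S. killing (f s) B)"
  by (induction S rule: infinite_finite_induct) (simp_all add: killing_add_l)
lemma killing_sum_r: "killing B (\<Sum>s\<in>S. f s) = (\<Sum>s\<in>S. killing B (f s))"
  by (induction S rule: infinite_finite_induct) (simp_all add: killing_add_r)

lemma brk_add_l: "brk (A + B) C = brk A C + brk B C"
  unfolding brk_def by (simp add: mm_add_r mm_add_l)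
lemma brk_add_r: "brk C (A + B) = brk C A + brk C B"
  unfolding brk_def by (simp add: mm_add_r mm_add_l)
lemma brk_smul_l: "brk (smul c A) B = smul c (brk A B)"
  unfolding brk_def by (simp add: smul_mm_l smul_mm_r smul_diff)
lemma brk_smul_r: "brk B (smul c A) = smul c (brk B A)"
  unfolding brk_def by (simp add: smul_mm_l smul_mm_r smul_diff)
lemma brk_zero[simp]: "brk 0 B = 0" "brk B 0 = 0"
  unfolding brk_def by simp_all
lemma brk_sum_l: "brk (\<Sum>s\<in>S. f s) B = (\<Sum>s\<in>S. brk (f s) B)"
  by (induction S rule: infinite_finite_induct) (simp_all add: brk_add_l)
lemma brk_sum_r: "brk B (\<Sum>s\<in>S. f s) = (\<Sum>s\<in>S. brk B (f s))"
  by (induction S rule: infinite_finite_induct) (simp_all add: brk_add_r)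
lemma trace_sum: "trace (\<Sum>s\<in>S. f s) = (\<Sum>s\<in>S. trace (f s))"
  unfolding trace_def by (simp add: sum.swap[of _ S])




lemmas mdefs = H1_def H2_def H3_def Xa1_def Xa2_def Xa3_def Xa12_def Xa23_def Xa123_def
  Xm1_def Xm2_def Xm3_def Xm12_def Xm23_def Xm123_def e_nil_def hplus_def

lemmas ent = brk_def mm_nth sum10 Xn1_vals mdefs

lemma part1: "n1 \<inter> cent_e = {0}"
proof -
  have "A = 0" if A1: "A \<in> n1" and A2: "A \<in> cent_e" for A
  proof -
    obtain c where c: "A = (\<Sum>i\<in>UNIV. smul (c $ i) (Xn1 i))" using A1 unfolding n1_def by blast
    have h: "brk e_nil A $ a $ b = 0" for a b using A2 unfolding cent_e_def by simp
    have e5: "c$5 = 0" using h[of 0 0] unfolding c by (simp add: ent)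
    have e10: "c$1 - 2 * c$0 = 0" using h[of 0 1] unfolding c by (simp add: ent)
    have e3: "c$3 = 0" using h[of 0 2] unfolding c by (simp add: ent)
    have e2: "c$2 = 0" using h[of 0 3] unfolding c by (simp add: ent)
    have e9: "c$9 = 0" using h[of 1 0] unfolding c by (simp add: ent)
    have e8: "c$8 - c$5 = 0" using h[of 1 1] unfolding c by (simp add: ent)
    have e6: "c$6 = 0" using h[of 1 2] unfolding c by (simp add: ent)
    have e01: "c$0 - c$1 = 0" using h[of 1 3] unfolding c by (simp add: ent)
    have e7: "c$7 = 0" using h[of 2 1] unfolding c by (simp add: ent)
    have e4: "c$4 = 0" using h[of 2 3] unfolding c by (simp add: ent)
    have e0: "c$0 = 0" "c$1 = 0" using e10 e01 by auto
    have e8': "c$8 = 0" using e8 e5 by simp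
    show "A = 0" unfolding c
      by (simp add: ent vec_eq_iff all4 e0 e2 e3 e4 e5 e6 e7 e8' e9)
  qed
  moreover have "(0::mat4) \<in> n1"
    unfolding n1_def by (rule CollectI, rule exI[of _ 0]) (simp add: smul_def vec_eq_iff)
  moreover have "(0::mat4) \<in> cent_e"
    unfolding cent_e_def sl4_def brk_def by (simp add: trace_def)
  ultimately show ?thesis by blast
qed

definition cdec :: "mat4 \<Rightarrow> complex^10" where
  "cdec A = (\<chi> i. if i = 0 then A$0$0 - A$3$3 else if i = 1 then A$1$1 + A$0$0 - 2 * A$3$3
     else if i = 2 then A$0$1 - A$1$3 else if i = 3 then A$1$2 else if i = 4 then A$2$1
     else if i = 5 then A$1$0 else if i = 6 then A$3$2 else if i = 7 then A$2$0
     else if i = 8 then A$3$1 else A$3$0)"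

lemma part2: "\<forall>A\<in>sl4. \<exists>x\<in>n1. \<exists>z\<in>cent_e. A = x + z"
proof
  fix A assume A: "A \<in> sl4"
  define x where "x = (\<Sum>i\<in>UNIV. smul (cdec A $ i) (Xn1 i))"
  have x1: "x \<in> n1" unfolding n1_def x_def by blast
  have tA: "A$0$0 + A$1$1 + A$2$2 + A$3$3 = 0" using A unfolding sl4_def trace_def by (simp add: sum4)
  have z1: "A - x \<in> cent_e"
    unfolding cent_e_def sl4_def
  proof (intro CollectI conjI)
    show "trace (A - x) = 0" unfolding x_def trace_def using tA
      by (simp add: ent sum4 cdec_def algebra_simps)
    show "brk e_nil (A - x) = 0" unfolding x_def
      by (simp add: ent vec_eq_iff all4 cdec_def algebra_simps)
  qed
  show "\<exists>x\<in>n1. \<exists>z\<in>cent_e. A = x + z" using x1 z1 by (intro bexI[of _ x] bexI[of _ "A - x"]) auto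
qed

lemma part3: "\<exists>x\<in>n1. brk hplus x \<notin> n1"
proof
  show "Xn1 5 \<in> n1" unfolding n1_def
    by (rule CollectI, rule exI[of _ "\<chi> i. if i = 5 then 1 else 0"]) (simp add: sum10 smul_def vec_eq_iff)
  show "brk hplus (Xn1 5) \<notin> n1"
  proof
    assume "brk hplus (Xn1 5) \<in> n1"
    then obtain c where c: "brk hplus (Xn1 5) = (\<Sum>i\<in>UNIV. smul (c $ i) (Xn1 i))" unfolding n1_def by blast
    have "brk hplus (Xn1 5) $ 1 $ 0 = (\<Sum>i\<in>UNIV. smul (c $ i) (Xn1 i)) $ 1 $ 0" using c by simp
    then have a: "c$5 = -2" by (simp add: ent smul_def)
    have "brk hplus (Xn1 5) $ 2 $ 3 = (\<Sum>i\<in>UNIV. smul (c $ i) (Xn1 i)) $ 2 $ 3" using c by simp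
    then have b: "c$5 = 2" by (simp add: ent smul_def)
    from a b show False by simp
  qed
qed
definition yd :: "complex \<Rightarrow> mat4" where
  "yd d = Emat 2 0 + Emat 3 1 + smul d (Emat 3 2 - Emat 0 1)"

definition Cv :: "complex \<Rightarrow> complex^10 \<Rightarrow> complex^10" where
  "Cv d x = (\<chi> l. killing (e_nil + yd d) (brk (Xn1 l) (\<Sum>m\<in>UNIV. smul (x$m) (Xn1 m))))"

lemma Cv_comp:
  "Cv d x $ 0 = 16*(d-1)*x$5 + 8*x$8"
  "Cv d x $ 1 = (8-16*d)*x$5 - 8*x$8"
  "Cv d x $ 2 = 8*x$3 - 8*x$9"
  "Cv d x $ 3 = -8*x$2 + 8*x$5 + (8-8*d)*x$7"
  "Cv d x $ 4 = -8*x$6"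
  "Cv d x $ 5 = (16-16*d)*x$0 + (16*d-8)*x$1 - 8*x$3"
  "Cv d x $ 6 = 8*x$4"
  "Cv d x $ 7 = (8*d-8)*x$3"
  "Cv d x $ 8 = -8*x$0 + 8*x$1"
  "Cv d x $ 9 = 8*x$2"
  by (simp_all add: Cv_def killing_ex sum4 yd_def ent algebra_simps)

lemma Cv_ker: assumes d: "d \<noteq> 1" and h: "Cv d x = 0" shows "x = 0"
proof -
  have r: "\<And>k. Cv d x $ k = 0" using h by simp
  note r' = r[unfolded Cv_comp]
  have r0: "16*(d-1)*x$5 + 8*x$8 = 0" using r[of 0] unfolding Cv_comp .
  have r1: "(8-16*d)*x$5 - 8*x$8 = 0" using r[of 1] unfolding Cv_comp .
  have r2: "8*x$3 - 8*x$9 = 0" using r[of 2] unfolding Cv_comp .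
  have r3: "-8*x$2 + 8*x$5 + (8-8*d)*x$7 = 0" using r[of 3] unfolding Cv_comp .
  have r4: "-8*x$6 = 0" using r[of 4] unfolding Cv_comp .
  have r5: "(16-16*d)*x$0 + (16*d-8)*x$1 - 8*x$3 = 0" using r[of 5] unfolding Cv_comp .
  have r6: "8*x$4 = 0" using r[of 6] unfolding Cv_comp .
  have r7: "(8*d-8)*x$3 = 0" using r[of 7] unfolding Cv_comp .
  have r8: "-8*x$0 + 8*x$1 = 0" using r[of 8] unfolding Cv_comp .
  have r9: "8*x$2 = 0" using r[of 9] unfolding Cv_comp .
  have d1: "d - 1 \<noteq> 0" "8*d - 8 \<noteq> 0" "8 - 8*d \<noteq> 0" using d by auto
  have x2: "x$2 = 0" using r9 by simp
  have x6: "x$6 = 0" using r4 by simp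
  have x4: "x$4 = 0" using r6 by simp
  have x3: "x$3 = 0" using r7 d1 by simp
  have x9: "x$9 = 0" using r2 x3 by simp
  have "(16*(d-1)*x$5 + 8*x$8) + ((8-16*d)*x$5 - 8*x$8) = 0" using r0 r1 by simp
  then have x5: "x$5 = 0" by (simp add: algebra_simps)
  have x8: "x$8 = 0" using r0 x5 by simp
  have x7: "x$7 = 0" using r3 x5 x2 d1 by simp
  have x10: "x$1 = x$0" using r8 by simp
  have "(16-16*d)*x$0 + (16*d-8)*x$0 = 0" using r5 x10 x3 by simp
  then have x0: "x$0 = 0" by (simp add: algebra_simps)
  show "x = 0" using x0 x10 x2 x3 x4 x5 x6 x7 x8 x9 by (simp add: vec_eq_iff all10)
qed

definition vv :: "complex \<Rightarrow> complex^10" where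
  "vv s = (\<chi> l. if l = 0 \<or> l = 1 then 1 + s else if l = 3 \<or> l = 9 then s
            else if l = 4 then -1 else 0)"

lemma Cv_vv: assumes d: "d \<noteq> 1"
  shows "Cv d (vv (d/(d-1))) = (\<chi> l. killing (yd d) (brk (Xn1 l) (Emat 0 3)))"
proof -
  define s where "s = d/(d-1)"
  have d1: "d - 1 \<noteq> 0" using d by simp
  have hs: "d * s = s + d" unfolding s_def using d1 by (simp add: field_simps)
  have hs2: "d * (s * 8) = d * 8 + s * 8"
  proof -
    have "d * (s * 8) = (d * s) * 8" by (simp only: mult.assoc)
    also have "\<dots> = d * 8 + s * 8" unfolding hs by (simp only: distrib_right add.commute)
    finally show ?thesis .
  qed
  have u: "(\<chi> l. killing (yd d) (brk (Xn1 l) (Emat 0 3))) =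
     (\<chi> k. if k = 5 then 8 else if k = 6 then -8 else if k = 7 then 8 * d else 0)"
    by (simp add: vec_eq_iff all10 killing_ex sum4 yd_def ent)
  show ?thesis
    unfolding u vec_eq_iff all10 Cv_comp s_def[symmetric] by (simp add: vv_def algebra_simps hs hs2)
qed


lemma yd_sl4: "yd d \<in> sl4"
  by (simp add: sl4_def yd_def trace_def sum4)
lemma yd_perp: "killing (yd d) (Xn1 j) = 0"
proof -
  have "\<forall>j. killing (yd d) (Xn1 j) = 0"
    by (simp add: all10 killing_ex sum4 yd_def ent)
  then show ?thesis by blast
qed


lemma nondeg: assumes w: "w \<in> sl4" and h0: "\<And>A. A \<in> sl4 \<Longrightarrow> killing w A = 0" shows "w = 0"
proof -
  have h: "killing w A = 0" if "trace A = 0" for A using h0 that unfolding sl4_def by blast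
  have tw: "w$0$0 + w$1$1 + w$2$2 + w$3$3 = 0" using w unfolding sl4_def trace_def by (simp add: sum4)
  have n0: "w$0$1 = 0" using h[of "Emat 1 0"] by (simp add: killing_ex sum4 trace_def)
  have n1: "w$0$2 = 0" using h[of "Emat 2 0"] by (simp add: killing_ex sum4 trace_def)
  have n2: "w$0$3 = 0" using h[of "Emat 3 0"] by (simp add: killing_ex sum4 trace_def)
  have n3: "w$1$0 = 0" using h[of "Emat 0 1"] by (simp add: killing_ex sum4 trace_def)
  have n4: "w$1$2 = 0" using h[of "Emat 2 1"] by (simp add: killing_ex sum4 trace_def)
  have n5: "w$1$3 = 0" using h[of "Emat 3 1"] by (simp add: killing_ex sum4 trace_def)
  have n6: "w$2$0 = 0" using h[of "Emat 0 2"] by (simp add: killing_ex sum4 trace_def)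
  have n7: "w$2$1 = 0" using h[of "Emat 1 2"] by (simp add: killing_ex sum4 trace_def)
  have n8: "w$2$3 = 0" using h[of "Emat 3 2"] by (simp add: killing_ex sum4 trace_def)
  have n9: "w$3$0 = 0" using h[of "Emat 0 3"] by (simp add: killing_ex sum4 trace_def)
  have n10: "w$3$1 = 0" using h[of "Emat 1 3"] by (simp add: killing_ex sum4 trace_def)
  have n11: "w$3$2 = 0" using h[of "Emat 2 3"] by (simp add: killing_ex sum4 trace_def)
  have n12: "w$0$0 = w$3$3" using h[of "Emat 0 0 - Emat 3 3"] by (simp add: killing_ex sum4 trace_def)
  have n13: "w$1$1 = w$3$3" using h[of "Emat 1 1 - Emat 3 3"] by (simp add: killing_ex sum4 trace_def)
  have n14: "w$2$2 = w$3$3" using h[of "Emat 2 2 - Emat 3 3"] by (simp add: killing_ex sum4 trace_def)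
  have w33: "w$3$3 = 0" using tw n12 n13 n14 by simp
  show ?thesis using n0 n1 n2 n3 n4 n5 n6 n7 n8 n9 n10 n11 n12 n13 n14 w33 by (simp add: vec_eq_iff all4)
qed

lemma poly_cont:
  fixes P :: "complex^'k \<Rightarrow> complex" and f :: "complex \<Rightarrow> complex^'k"
  assumes "P \<in> poly_fun" and "\<And>s. continuous_on UNIV (\<lambda>d. f d $ s)"
  shows "continuous_on UNIV (\<lambda>d. P (f d))"
  using assms(1) by induction (auto intro!: continuous_intros assms(2))

lemma matrix_inv_left': "invertible A \<Longrightarrow> matrix_inv A ** A = mat 1"
  unfolding invertible_def matrix_inv_def by (metis (mono_tags, lifting) someI_ex)

lemma transpose_sum: "(\<Sum>i\<in>UNIV. a$i * (transpose D *v w)$i) = (\<Sum>l\<in>UNIV. (D *v a)$l * w$l)"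
  for D :: "complex^'k^'p"
proof -
  have "(\<Sum>i\<in>UNIV. a$i * (transpose D *v w)$i) = (\<Sum>i\<in>UNIV. \<Sum>l\<in>UNIV. a$i * (D$l$i * w$l))"
    unfolding matrix_vector_mult_def transpose_def by (simp add: sum_distrib_left)
  also have "\<dots> = (\<Sum>l\<in>UNIV. \<Sum>i\<in>UNIV. a$i * (D$l$i * w$l))" by (rule sum.swap)
  also have "\<dots> = (\<Sum>l\<in>UNIV. (D *v a)$l * w$l)"
    unfolding matrix_vector_mult_def vec_lambda_beta sum_distrib_right by (simp add: mult_ac)
  finally show ?thesis .
qed

lemma mult_delta: "x * (if P then 1 else 0) = (if P then x else (0::complex))" by simp


lemma part4:
  fixes Z Zbar :: "5 \<Rightarrow> mat4"
  assumes hZ: "\<forall>i. Z i \<in> cent_e"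
    and hspan: "\<forall>A\<in>cent_e. \<exists>c :: complex^5. A = (\<Sum>i\<in>UNIV. smul (c $ i) (Z i))"
    and hZb: "\<forall>s. Zbar s \<in> sl4"
    and hdual: "\<forall>s i. killing (Zbar s) (Z i) = (if s = i then 1 else 0)"
    and hperp: "\<forall>s j. killing (Zbar s) (Xn1 j) = 0"
  shows "\<exists>i j. \<not> (\<exists>P \<in> poly_fun.
               \<forall>q. invertible (C_N Xn1 Zbar q) \<longrightarrow> Lambda_N Xn1 Z Zbar q $ i $ j = P q)"
proof (rule ccontr)
  assume "\<not> ?thesis"
  then have "\<forall>ij. \<exists>P. P \<in> poly_fun \<and> (\<forall>q. invertible (C_N Xn1 Zbar q) \<longrightarrow>
      Lambda_N Xn1 Z Zbar q $ fst ij $ snd ij = P q)" by fast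
  then obtain F where F: "\<And>ij. F ij \<in> poly_fun"
    "\<And>ij q. invertible (C_N Xn1 Zbar q) \<Longrightarrow> Lambda_N Xn1 Z Zbar q $ fst ij $ snd ij = F ij q"
    by metis
  have W1: "Emat 0 2 \<in> cent_e" and W2: "Emat 0 3 \<in> cent_e"
    by (simp_all add: cent_e_def sl4_def trace_def sum4 vec_eq_iff all4 ent)
  obtain \<alpha> where \<alpha>: "Emat 0 2 = (\<Sum>i\<in>UNIV. smul (\<alpha> $ i) (Z i))" using hspan W1 by blast
  obtain \<beta> where \<beta>: "Emat 0 3 = (\<Sum>i\<in>UNIV. smul (\<beta> $ i) (Z i))" using hspan W2 by blast
  have orth: "w = 0" if w: "w \<in> sl4" "\<And>i. killing w (Z i) = 0" "\<And>j. killing w (Xn1 j) = 0" for w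
  proof (rule nondeg[OF w(1)])
    fix A assume "A \<in> sl4"
    then obtain x z where xz: "x \<in> n1" "z \<in> cent_e" "A = x + z" using part2 by blast
    obtain c where x: "x = (\<Sum>i\<in>UNIV. smul (c $ i) (Xn1 i))" using xz(1) unfolding n1_def by blast
    obtain \<gamma> where z: "z = (\<Sum>i\<in>UNIV. smul (\<gamma> $ i) (Z i))" using xz(2) hspan by blast
    show "killing w A = 0" unfolding xz(3) x z
      by (simp add: killing_add_r killing_sum_r killing_smul_r w(2,3))
  qed
  define q where "q d = (\<chi> s. killing (yd d) (Z s))" for d
  have qpt: "qpt Zbar (q d) = yd d" for d
  proof -
    let ?w = "yd d - qpt Zbar (q d)"
    have "?w \<in> sl4" using yd_sl4 hZb unfolding sl4_def qpt_def by (simp add: trace_sub trace_sum trace_smul)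
    moreover have "killing ?w (Z i) = 0" for i
      unfolding qpt_def using hdual by (simp add: killing_diff_l killing_sum_l killing_smul_l mult_delta q_def)
    moreover have "killing ?w (Xn1 j) = 0" for j
      unfolding qpt_def using hperp by (simp add: killing_diff_l killing_sum_l killing_smul_l yd_perp)
    ultimately have "?w = 0" by (rule orth)
    then show ?thesis by simp
  qed
  have Cm_v: "C_N Xn1 Zbar (q d) *v x = Cv d x" for d x
    unfolding C_N_def qpt Cv_def
    by (simp add: vec_eq_iff matrix_vector_mult_def killing_sum_r brk_sum_r brk_smul_r killing_smul_r mult.commute)
  have inv: "invertible (C_N Xn1 Zbar (q d))" if "d \<noteq> 1" for d
    unfolding invertible_left_inverse matrix_left_invertible_ker Cm_v using Cv_ker[OF that] by auto
  have Db: "D_N Xn1 Z Zbar (q d) *v \<beta> = (\<chi> l. killing (yd d) (brk (Xn1 l) (Emat 0 3)))" for d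
    unfolding D_N_def qpt \<beta>
    by (simp add: vec_eq_iff matrix_vector_mult_def killing_sum_r brk_sum_r brk_smul_r killing_smul_r mult.commute)
  have Da: "D_N Xn1 Z Zbar (q d) *v \<alpha> = (\<chi> l. killing (yd d) (brk (Xn1 l) (Emat 0 2)))" for d
    unfolding D_N_def qpt \<alpha>
    by (simp add: vec_eq_iff matrix_vector_mult_def killing_sum_r brk_sum_r brk_smul_r killing_smul_r mult.commute)
  have u1: "(\<chi> l. killing (yd d) (brk (Xn1 l) (Emat 0 2))) = (\<chi> k. if k = 0 \<or> k = 1 then 8 else 0)" for d
    by (simp add: vec_eq_iff all10 killing_ex sum4 yd_def ent)
  have Ab: "A_N Z Zbar (q d) *v \<beta> = (\<chi> i. killing (yd d) (brk (Z i) (Emat 0 3)))" for d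
    unfolding A_N_def qpt \<beta>
    by (simp add: vec_eq_iff matrix_vector_mult_def killing_sum_r brk_sum_r brk_smul_r killing_smul_r mult.commute)
  have Aterm: "(\<Sum>i\<in>UNIV. \<alpha>$i * (A_N Z Zbar (q d) *v \<beta>)$i) = 0" for d
  proof -
    have "(\<Sum>i\<in>UNIV. \<alpha>$i * (A_N Z Zbar (q d) *v \<beta>)$i) = killing (yd d) (brk (Emat 0 2) (Emat 0 3))"
      unfolding Ab \<alpha> by (simp add: killing_sum_r brk_sum_l brk_smul_l killing_smul_r)
    also have "\<dots> = 0" by (simp add: killing_ex sum4 yd_def ent)
    finally show ?thesis .
  qed
  have Q: "(\<Sum>i\<in>UNIV. \<alpha>$i * (Lambda_N Xn1 Z Zbar (q d) *v \<beta>)$i) = 16 * (1 + d/(d-1))" if d: "d \<noteq> 1" for d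
  proof -
    let ?C = "C_N Xn1 Zbar (q d)" and ?D = "D_N Xn1 Z Zbar (q d)"
    have Dv: "?D *v \<beta> = ?C *v vv (d/(d-1))" unfolding Db Cm_v Cv_vv[OF d] ..
    have M: "matrix_inv ?C *v (?D *v \<beta>) = vv (d/(d-1))"
      unfolding Dv matrix_vector_mul_assoc matrix_inv_left'[OF inv[OF d]] by simp
    have "Lambda_N Xn1 Z Zbar (q d) *v \<beta> = A_N Z Zbar (q d) *v \<beta> + transpose ?D *v vv (d/(d-1))"
      unfolding Lambda_N_def matrix_vector_mult_add_rdistrib
      by (simp add: matrix_vector_mul_assoc[symmetric] M)
    then have "(\<Sum>i\<in>UNIV. \<alpha>$i * (Lambda_N Xn1 Z Zbar (q d) *v \<beta>)$i)
       = (\<Sum>i\<in>UNIV. \<alpha>$i * (A_N Z Zbar (q d) *v \<beta>)$i) + (\<Sum>i\<in>UNIV. \<alpha>$i * (transpose ?D *v vv (d/(d-1)))$i)"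
      by (simp add: distrib_left sum.distrib)
    also have "\<dots> = (\<Sum>l\<in>UNIV. (?D *v \<alpha>)$l * vv (d/(d-1)) $ l)" unfolding Aterm transpose_sum by simp
    also have "\<dots> = 16 * (1 + d/(d-1))" unfolding Da u1 by (simp add: sum10 vv_def)
    finally show ?thesis .
  qed
  define G where "G d = (\<Sum>i\<in>UNIV. \<alpha>$i * (\<Sum>j\<in>UNIV. F (i,j) (q d) * \<beta>$j))" for d
  have GQ: "G d = 16 * (1 + d/(d-1))" if d: "d \<noteq> 1" for d
  proof -
    have Fij: "Lambda_N Xn1 Z Zbar (q d) $ i $ j = F (i,j) (q d)" for i j
      using F(2)[OF inv[OF d], of "(i,j)"] by simp
    have "G d = (\<Sum>i\<in>UNIV. \<alpha>$i * (Lambda_N Xn1 Z Zbar (q d) *v \<beta>)$i)"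
      unfolding G_def matrix_vector_mult_def by (simp add: Fij)
    then show ?thesis using Q[OF d] by simp
  qed
  have qc: "continuous_on UNIV (\<lambda>d. q d $ s)" for s
  proof -
    have "q d $ s = killing (Emat 2 0 + Emat 3 1) (Z s) + d * killing (Emat 3 2 - Emat 0 1) (Z s)" for d
      unfolding q_def yd_def by (simp add: killing_add_l killing_smul_l)
    then show ?thesis by (simp add: continuous_intros)
  qed
  have Gc: "continuous_on UNIV G"
    unfolding G_def by (intro continuous_intros poly_cont[OF F(1)] qc)
  have "((\<lambda>d. (d - 1) * G d) \<longlongrightarrow> (1 - 1) * G 1) (at 1)"
    using Gc by (intro tendsto_intros) (simp add: continuous_on_eq_continuous_at isCont_def)
  then have L1: "((\<lambda>d. (d - 1) * G d) \<longlongrightarrow> 0) (at (1::complex))" by simp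
  have ev: "\<forall>\<^sub>F d in at (1::complex). 16 * (d - 1) + 16 * d = (d - 1) * G d"
    unfolding eventually_at_filter
    by (rule always_eventually) (auto simp: GQ field_simps)
  have "((\<lambda>d. 16 * (d - 1) + 16 * d) \<longlongrightarrow> 16 * (1 - 1) + 16 * 1) (at (1::complex))"
    by (intro tendsto_intros)
  then have "((\<lambda>d. 16 * (d - 1) + 16 * d) \<longlongrightarrow> 16) (at (1::complex))" by simp
  then have L2: "((\<lambda>d. (d - 1) * G d) \<longlongrightarrow> 16) (at (1::complex))"
    using ev by (rule Lim_transform_eventually)
  have "(0::complex) = 16" using tendsto_unique[OF _ L1 L2] by simp
  then show False by simp
qed


theorem mainTheorem7:
  shows "n1 \<inter> cent_e = {0}
    \<and> (\<forall>A\<in>sl4. \<exists>x\<in>n1. \<exists>z\<in>cent_e. A = x + z)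
    \<and> (\<exists>x\<in>n1. brk hplus x \<notin> n1)
    \<and> (\<forall>(Z :: 5 \<Rightarrow> mat4) (Zbar :: 5 \<Rightarrow> mat4).
         (\<forall>i. Z i \<in> cent_e)
         \<and> (\<forall>c :: complex^5. (\<Sum>i\<in>UNIV. smul (c $ i) (Z i)) = 0 \<longrightarrow> c = 0)
         \<and> (\<forall>A\<in>cent_e. \<exists>c :: complex^5. A = (\<Sum>i\<in>UNIV. smul (c $ i) (Z i)))
         \<and> (\<forall>s. Zbar s \<in> sl4)
         \<and> (\<forall>s i. killing (Zbar s) (Z i) = (if s = i then 1 else 0))
         \<and> (\<forall>s j. killing (Zbar s) (Xn1 j) = 0)
       \<longrightarrow> (\<exists>i j. \<not> (\<exists>P \<in> poly_fun.
               \<forall>q. invertible (C_N Xn1 Zbar q) \<longrightarrow> Lambda_N Xn1 Z Zbar q $ i $ j = P q)))"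
proof -
  show ?thesis
    apply (intro conjI part1 part2 part3 allI impI)
    apply (elim conjE)
    apply (rule part4; assumption)
    done
qed

end
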